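(* Let $s=(x,y,u,v)$ with $x,y,u,v\ge0$ and $x+y+u+v>4$, and write $W^k(s)=(x^{(k)},y^{(k)},u^{(k)},v^{(k)})$. (a) If there exists $k\ge0$ with $(x^{(k)}+y^{(k)})(u^{(k)}+v^{(k)})<4$, then $\lim_{n\to\infty}W^n(s)=(0,0,0,0)$. (b) If $\max\{\tfrac{xu}{4},\tfrac{yu}{16},\tfrac{yv}{9}\}>1$, then at least one coordinate of $W^n(s)$ tends to $+\infty$ as $n\to\infty$.
   Context: $W:\mathbb{R}^4\to\mathbb{R}^4$ is the map $W(x,y,u,v)=(x',y',u',v')$ with $x'=\tfrac12 xu+\tfrac14 yu$, $y'=\tfrac12 xv+\tfrac14 yu+\tfrac13 yv$, $u'=\tfrac12 xu+\tfrac12 xv+\tfrac14 yu+\tfrac13 yv$, $v'=\tfrac14 yu+\tfrac13 yv$. $W^k$ denotes the $k$-fold iterate ($W^0$ the identity). *)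

theory Defs
  imports "HOL-Analysis.Analysis"
begin

type_synonym state = "real \<times> real \<times> real \<times> real"

definition W :: "state \<Rightarrow> state" where
  "W s = (case s of (x, y, u, v) \<Rightarrow>
     (x * u/2 + y * u/4,
      x * v/2 + y * u/4 + y * v/3,
      x * u/2 + x * v/2 + y * u/4 + y * v/3,
      y * u/4 + y * v/3))"

definition cx :: "state \<Rightarrow> real" where "cx s = fst s"
definition cy :: "state \<Rightarrow> real" where "cy s = fst (snd s)"
definition cu :: "state \<Rightarrow> real" where "cu s = fst (snd (snd s))"
definition cv :: "state \<Rightarrow> real" where "cv s = snd (snd (snd s))"

end

theory Submission
  imports Defs
begin

definition nn :: "state \<Rightarrow> bool" where
  "nn s \<longleftrightarrow> cx s \<ge> 0 \<and> cy s \<ge> 0 \<and> cu s \<ge> 0 \<and> cv s \<ge> 0"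

definition PP :: "state \<Rightarrow> real" where
  "PP s = (cx s + cy s) * (cu s + cv s)"

lemma W_coords:
  "cx (W s) = cx s * cu s/2 + cy s * cu s/4"
  "cy (W s) = cx s * cv s/2 + cy s * cu s/4 + cy s * cv s/3"
  "cu (W s) = cx s * cu s/2 + cx s * cv s/2 + cy s * cu s/4 + cy s * cv s/3"
  "cv (W s) = cy s * cu s/4 + cy s * cv s/3"
  by (cases s; auto simp: W_def cx_def cy_def cu_def cv_def)+

lemma W_nn: "nn s \<Longrightarrow> nn (W s)"
  unfolding nn_def W_coords by (auto intro!: add_nonneg_nonneg mult_nonneg_nonneg)

lemma iter_nn: "nn s \<Longrightarrow> nn ((W ^^ n) s)"
  by (induction n) (auto intro: W_nn)

lemma PP_nn: "nn s \<Longrightarrow> PP s \<ge> 0"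
  unfolding nn_def PP_def by auto

lemma PP_step: assumes "nn s" shows "PP (W s) \<le> (PP s)^2/4"
proof -
  define x where "x = cx s" define y where "y = cy s"
  define u where "u = cu s" define v where "v = cv s"
  define a where "a = x * u + x * v + y * u"
  define b where "b = y * v"
  have "a \<ge> 0" "b \<ge> 0" using assms unfolding nn_def a_def b_def x_def y_def u_def v_def
    by (auto intro!: add_nonneg_nonneg mult_nonneg_nonneg)
  have yu: "y*u \<ge> 0" using assms unfolding nn_def y_def u_def by auto
  have e1: "PP s = a + b" unfolding PP_def a_def b_def x_def y_def u_def v_def
    by (simp add: algebra_simps)
  have "PP (W s) = (a/2 + b/3) * (a/2 + 2*b/3)"
    unfolding PP_def W_coords a_def b_def x_def y_def u_def v_def
    by (simp add: field_simps)
  also have "\<dots> \<le> (a+b)^2/4" using \<open>b \<ge> 0\<close>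
    by (simp add: power2_eq_square algebra_simps)
  finally show ?thesis using e1 by simp
qed

lemma coords_le: assumes "nn s"
  shows "cx (W s) \<le> PP s" "cy (W s) \<le> PP s" "cu (W s) \<le> PP s" "cv (W s) \<le> PP s"
proof -
  have h: "cx s * cu s \<ge> 0" "cx s * cv s \<ge> 0" "cy s * cu s \<ge> 0" "cy s * cv s \<ge> 0"
    using assms unfolding nn_def by auto
  have P: "PP s = cx s * cu s + cx s * cv s + cy s * cu s + cy s * cv s"
    unfolding PP_def by (simp add: algebra_simps)
  show "cx (W s) \<le> PP s" "cy (W s) \<le> PP s" "cu (W s) \<le> PP s" "cv (W s) \<le> PP s"
    unfolding W_coords P using h by linarith+
qed

lemma sq_aux:
  fixes k p Y :: real
  assumes "k > 0" "(p/k)*(p/k) \<le> Y"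
  shows "(p/(k*k))^2 \<le> Y/(k*k)"
proof -
  have "(p/(k*k))^2 = ((p/k)*(p/k))/(k*k)" using assms(1) by (simp add: power2_eq_square)
  also have "\<dots> \<le> Y/(k*k)" using assms by (intro divide_right_mono) auto
  finally show ?thesis .
qed

lemma grow:
  fixes q c :: "nat \<Rightarrow> real"
  assumes q0: "q 0 > 1" and qs: "\<And>n. q (Suc n) \<ge> (q n)^2"
    and cs: "\<And>n. c (Suc n) \<ge> \<alpha> * q n" and al: "\<alpha> > 0"
  shows "filterlim c at_top sequentially"
proof -
  define d where "d = q 0 - 1"
  have d: "d > 0" using q0 d_def by simp
  have ind: "q n \<ge> q 0 \<and> q n \<ge> 1 + real n * d" for n
  proof (induction n)
    case 0 then show ?case using q0 by (simp add: d_def)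
  next
    case (Suc n)
    have "q n * q n \<ge> q n * q 0" using Suc q0 by (intro mult_left_mono) auto
    moreover have "q n * q 0 = q n + q n * d" by (simp add: d_def algebra_simps)
    moreover have "q n * d \<ge> q 0 * d" using Suc d by (intro mult_right_mono) auto
    moreover have "q 0 * d \<ge> d" using q0 d by simp
    moreover have "q (Suc n) \<ge> q n * q n" using qs[of n] by (simp add: power2_eq_square)
    moreover have "q n * q 0 \<ge> q 0" using Suc q0 by simp
    ultimately have "q (Suc n) \<ge> q 0" "q (Suc n) \<ge> 1 + real n * d + d" using Suc by linarith+
    then show ?case by (simp add: algebra_simps)
  qed
  have lim: "filterlim (\<lambda>n. (\<alpha> * d) * real n) at_top sequentially"
    by (rule filterlim_tendsto_pos_mult_at_top[OF tendsto_const])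
       (use al d in \<open>auto intro: filterlim_real_sequentially\<close>)
  have "filterlim (\<lambda>n. c (Suc n)) at_top sequentially"
  proof (rule filterlim_at_top_mono[OF lim])
    show "\<forall>\<^sub>F n in sequentially. \<alpha> * d * real n \<le> c (Suc n)"
    proof (intro always_eventually allI)
      fix n
      have "\<alpha> * d * real n \<le> \<alpha> * (1 + real n * d)" using al by (simp add: algebra_simps)
      also have "\<dots> \<le> \<alpha> * q n" using ind[of n] al by (intro mult_left_mono) auto
      also have "\<dots> \<le> c (Suc n)" by (rule cs)
      finally show "\<alpha> * d * real n \<le> c (Suc n)" .
    qed
  qed
  then show ?thesis by (simp add: filterlim_sequentially_Suc)
qed

theorem lemma3p5:
  fixes x y u v :: real
  assumes "x \<ge> 0" "y \<ge> 0" "u \<ge> 0" "v \<ge> 0" "x + y + u + v > 4"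
  shows "((\<exists>k::nat. (cx ((W ^^ k) (x, y, u, v)) + cy ((W ^^ k) (x, y, u, v))) *
                     (cu ((W ^^ k) (x, y, u, v)) + cv ((W ^^ k) (x, y, u, v))) < 4)
            \<longrightarrow> (\<lambda>n. (W ^^ n) (x, y, u, v)) \<longlonglongrightarrow> (0, 0, 0, 0))
       \<and> (max (x * u/4) (max (y * u/16) (y * v/9)) > 1
            \<longrightarrow> (\<exists>c \<in> {cx, cy, cu, cv}.
                   filterlim (\<lambda>n. c ((W ^^ n) (x, y, u, v))) at_top sequentially))"
proof -
  define s where "s n = (W ^^ n) (x, y, u, v)" for n
  have nn0: "nn (x,y,u,v)" using assms by (simp add: nn_def cx_def cy_def cu_def cv_def)
  have nns: "nn (s n)" for n unfolding s_def using nn0 by (rule iter_nn)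
  have sS: "s (Suc n) = W (s n)" for n unfolding s_def by simp
  have A: "(\<lambda>n. s n) \<longlonglongrightarrow> (0, 0, 0, 0)" if "PP (s k) < 4" for k
  proof -
    define r where "r = PP (s k) / 4"
    have r: "0 \<le> r" "r < 1" using that PP_nn[OF nns] unfolding r_def by auto
    have bnd: "PP (s (k + m)) \<le> 4 * r^m \<and> PP (s (k + m)) \<le> 4 * r" for m
    proof (induction m)
      case 0 then show ?case using that by (simp add: r_def)
    next
      case (Suc m)
      have p0: "PP (s (k+m)) \<ge> 0" by (rule PP_nn[OF nns])
      have "PP (s (k + Suc m)) \<le> (PP (s (k+m)))^2/4" using PP_step[OF nns] sS by simp
      also have "\<dots> = PP (s (k+m)) * (PP (s (k+m))/4)" by (simp add: power2_eq_square)
      also have "\<dots> \<le> PP (s (k+m)) * r" using Suc p0 by (intro mult_left_mono) auto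
      finally have h: "PP (s (k + Suc m)) \<le> PP (s (k+m)) * r" .
      have "PP (s (k+m)) * r \<le> 4 * r^m * r" using Suc r by (intro mult_right_mono) auto
      moreover have "PP (s (k+m)) * r \<le> 4 * r" using Suc r p0
        by (metis mult.commute mult_left_le_one_le order.trans less_imp_le)
      ultimately show ?case using h by (simp add: algebra_simps)
    qed
    have g: "(\<lambda>m. 4 * r^m) \<longlonglongrightarrow> 0"
      using r by (intro tendsto_mult_right_zero LIMSEQ_power_zero) auto
    have co: "(\<lambda>n. c (s n)) \<longlonglongrightarrow> 0"
      if cle: "\<And>t. nn t \<Longrightarrow> c (W t) \<le> PP t" and cnn: "\<And>t. nn t \<Longrightarrow> c t \<ge> 0" for c
    proof -
      have "(\<lambda>m. c (s (m + Suc k))) \<longlonglongrightarrow> 0"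
      proof (rule Lim_null_comparison[OF _ g])
        show "\<forall>\<^sub>F m in sequentially. norm (c (s (m + Suc k))) \<le> 4 * r ^ m"
        proof (intro always_eventually allI)
          fix m
          have "s (m + Suc k) = W (s (k + m))" using sS[of "k+m"] by (simp add: add.commute)
          then have "c (s (m + Suc k)) \<le> PP (s (k+m))" using cle[OF nns] by simp
          then show "norm (c (s (m + Suc k))) \<le> 4 * r ^ m" using bnd[of m] cnn[OF nns] by simp
        qed
      qed
      then show ?thesis by (rule LIMSEQ_offset)
    qed
    have t1: "(\<lambda>n. cx (s n)) \<longlonglongrightarrow> 0" by (rule co) (auto simp: coords_le nn_def)
    have t2: "(\<lambda>n. cy (s n)) \<longlonglongrightarrow> 0" by (rule co) (auto simp: coords_le nn_def)
    have t3: "(\<lambda>n. cu (s n)) \<longlonglongrightarrow> 0" by (rule co) (auto simp: coords_le nn_def)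
    have t4: "(\<lambda>n. cv (s n)) \<longlonglongrightarrow> 0" by (rule co) (auto simp: coords_le nn_def)
    have eq: "s = (\<lambda>n. (cx (s n), cy (s n), cu (s n), cv (s n)))"
      by (simp add: cx_def cy_def cu_def cv_def)
    show ?thesis by (subst eq) (intro tendsto_Pair t1 t2 t3 t4)
  qed
  have B: "\<exists>c \<in> {cx, cy, cu, cv}. filterlim (\<lambda>n. c (s n)) at_top sequentially"
    if H: "max (x * u/4) (max (y * u/16) (y * v/9)) > 1"
  proof -
    have s0: "s 0 = (x,y,u,v)" unfolding s_def by simp
    have h: "cx (s n) * cu (s n) \<ge> 0" "cx (s n) * cv (s n) \<ge> 0" "cy (s n) * cu (s n) \<ge> 0"
      "cy (s n) * cv (s n) \<ge> 0" for n using nns[of n] unfolding nn_def by auto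
    consider "x * u/4 > 1" | "y * u/16 > 1" | "y * v/9 > 1" using H unfolding less_max_iff_disj by blast
    then show ?thesis
    proof cases
      case 1
      have "filterlim (\<lambda>n. cx (s n)) at_top sequentially"
      proof (rule grow[where q = "\<lambda>n. cx (s n) * cu (s n) / 4" and \<alpha> = 2])
        show "1 < cx (s 0) * cu (s 0) / 4" using 1 s0 by (simp add: cx_def cu_def)
        fix n
        have a: "cx (s (Suc n)) \<ge> cx (s n) * cu (s n) / 2" "cu (s (Suc n)) \<ge> cx (s n) * cu (s n) / 2"
          unfolding sS W_coords using h[of n] by linarith+
        have "(cx (s n) * cu (s n) / 2) * (cx (s n) * cu (s n) / 2) \<le> cx (s (Suc n)) * cu (s (Suc n))"
          using a h[of n] by (intro mult_mono) auto
        then show "(cx (s n) * cu (s n) / 4)^2 \<le> cx (s (Suc n)) * cu (s (Suc n)) / 4"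
          using sq_aux[of 2] by simp
        show "2 * (cx (s n) * cu (s n) / 4) \<le> cx (s (Suc n))" using a(1) by linarith
      qed simp
      then show ?thesis by auto
    next
      case 2
      have "filterlim (\<lambda>n. cy (s n)) at_top sequentially"
      proof (rule grow[where q = "\<lambda>n. cy (s n) * cu (s n) / 16" and \<alpha> = 4])
        show "1 < cy (s 0) * cu (s 0) / 16" using 2 s0 by (simp add: cy_def cu_def)
        fix n
        have a: "cy (s (Suc n)) \<ge> cy (s n) * cu (s n) / 4" "cu (s (Suc n)) \<ge> cy (s n) * cu (s n) / 4"
          unfolding sS W_coords using h[of n] by linarith+
        have "(cy (s n) * cu (s n) / 4) * (cy (s n) * cu (s n) / 4) \<le> cy (s (Suc n)) * cu (s (Suc n))"
          using a h[of n] by (intro mult_mono) auto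
        then show "(cy (s n) * cu (s n) / 16)^2 \<le> cy (s (Suc n)) * cu (s (Suc n)) / 16"
          using sq_aux[of 4] by simp
        show "4 * (cy (s n) * cu (s n) / 16) \<le> cy (s (Suc n))" using a(1) by linarith
      qed simp
      then show ?thesis by auto
    next
      case 3
      have "filterlim (\<lambda>n. cy (s n)) at_top sequentially"
      proof (rule grow[where q = "\<lambda>n. cy (s n) * cv (s n) / 9" and \<alpha> = 3])
        show "1 < cy (s 0) * cv (s 0) / 9" using 3 s0 by (simp add: cy_def cv_def)
        fix n
        have a: "cy (s (Suc n)) \<ge> cy (s n) * cv (s n) / 3" "cv (s (Suc n)) \<ge> cy (s n) * cv (s n) / 3"
          unfolding sS W_coords using h[of n] by linarith+
        have "(cy (s n) * cv (s n) / 3) * (cy (s n) * cv (s n) / 3) \<le> cy (s (Suc n)) * cv (s (Suc n))"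
          using a h[of n] by (intro mult_mono) auto
        then show "(cy (s n) * cv (s n) / 9)^2 \<le> cy (s (Suc n)) * cv (s (Suc n)) / 9"
          using sq_aux[of 3] by simp
        show "3 * (cy (s n) * cv (s n) / 9) \<le> cy (s (Suc n))" using a(1) by linarith
      qed simp
      then show ?thesis by auto
    qed
  qed
  show ?thesis
    using A B unfolding s_def[symmetric] PP_def by blast
qed

end
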